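(* For all integers $n\ge0$ and real numbers $x\in(-1,1)$, $$0<\int_x^1\frac{T_{n+1}(t)\,U_n(t)}{\sqrt{1-t^2}}\,dt\le 1.$$ Equality holds on the right-hand side if and only if $n=0$ and $x=0$.
   Context: $T_j$ and $U_j$ denote the Chebyshev polynomials of the first and second kind of degree $j$: $T_j(\cos t)=\cos(jt)$ and $U_j(\cos t)=\sin((j+1)t)/\sin t$ for $t\in[0,\pi]$. *)

theory Defs
  imports "HOL-Analysis.Analysis"
begin

fun cheb_T :: "nat \<Rightarrow> real \<Rightarrow> real" where
  "cheb_T 0 x = 1"
| "cheb_T (Suc 0) x = x"
| "cheb_T (Suc (Suc n)) x = 2 * x * cheb_T (Suc n) x - cheb_T n x"

fun cheb_U :: "nat \<Rightarrow> real \<Rightarrow> real" where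
  "cheb_U 0 x = 1"
| "cheb_U (Suc 0) x = 2 * x"
| "cheb_U (Suc (Suc n)) x = 2 * x * cheb_U (Suc n) x - cheb_U n x"

end

theory Submission
  imports Defs
begin


lemma cheb_cos:
  "cheb_T k (cos th) = cos (real k * th) \<and> cheb_U k (cos th) * sin th = sin (real (Suc k) * th)"
proof (induction k rule: nat_less_induct)
  case (1 k)
  show ?case
  proof (cases k)
    case 0 then show ?thesis by simp
  next
    case (Suc j) note kj = this
    show ?thesis
    proof (cases j)
      case 0 then show ?thesis using kj by (simp add: sin_double)
    next
      case (Suc i)
      have IH1: "cheb_T i (cos th) = cos (real i * th)" "cheb_U i (cos th) * sin th = sin (real (Suc i) * th)"
        using 1 kj Suc by auto
      have IH2: "cheb_T (Suc i) (cos th) = cos (real (Suc i) * th)" "cheb_U (Suc i) (cos th) * sin th = sin (real (Suc (Suc i)) * th)"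
        using 1 kj Suc by auto
      have e1: "cos (real (Suc (Suc i)) * th) = 2 * cos th * cos (real (Suc i) * th) - cos (real i * th)"
      proof -
        have a: "real (Suc (Suc i)) * th = real (Suc i) * th + th" "real i * th = real (Suc i) * th - th"
          by (simp_all add: algebra_simps)
        show ?thesis unfolding a cos_add cos_diff by simp
      qed
      have e2: "sin (real (Suc (Suc (Suc i))) * th) = 2 * cos th * sin (real (Suc (Suc i)) * th) - sin (real (Suc i) * th)"
      proof -
        have a: "real (Suc (Suc (Suc i))) * th = real (Suc (Suc i)) * th + th" "real (Suc i) * th = real (Suc (Suc i)) * th - th"
          by (simp_all add: algebra_simps)
        show ?thesis unfolding a sin_add sin_diff by simp
      qed
      show ?thesis using IH1 IH2 e1 e2 kj Suc by (simp add: algebra_simps)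
    qed
  qed
qed

lemma cont_T: "continuous_on UNIV (cheb_T k) \<and> continuous_on UNIV (cheb_T (Suc k))"
proof (induction k)
  case 0 then show ?case by (auto intro!: continuous_intros)
next
  case (Suc k)
  have "cheb_T (Suc (Suc k)) = (\<lambda>x. 2*x*cheb_T (Suc k) x - cheb_T k x)" by (rule ext) simp
  then show ?case using Suc by (auto intro!: continuous_intros)
qed
lemma cont_U: "continuous_on UNIV (cheb_U k) \<and> continuous_on UNIV (cheb_U (Suc k))"
proof (induction k)
  case 0 then show ?case by (auto intro!: continuous_intros)
next
  case (Suc k)
  have "cheb_U (Suc (Suc k)) = (\<lambda>x. 2*x*cheb_U (Suc k) x - cheb_U k x)" by (rule ext) simp
  then show ?case using Suc by (auto intro!: continuous_intros)
qed

lemma sum_cos_odd: "sin a * (\<Sum>k<m. cos ((2 * real k + 1) * a)) = sin (real m * a) * cos (real m * a)"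
proof (induction m)
  case 0 then show ?case by simp
next
  case (Suc m)
  have f1: "sin a * cos ((2 * real m + 1) * a) = (sin (real (Suc m) * 2 * a) - sin (real m * 2 * a)) / 2"
  proof -
    have a: "real (Suc m) * 2 * a = (2 * real m + 1) * a + a" "real m * 2 * a = (2 * real m + 1) * a - a"
      by (simp_all add: algebra_simps)
    show ?thesis unfolding a sin_add sin_diff by simp
  qed
  have f2: "sin (real m * a) * cos (real m * a) = sin (real m * 2 * a) / 2"
    using sin_double[of "real m * a"] by (simp add: algebra_simps)
  have "sin a * (\<Sum>k<Suc m. cos ((2 * real k + 1) * a)) = sin (real m * 2 * a) / 2 + (sin (real (Suc m) * 2 * a) - sin (real m * 2 * a)) / 2"
  proof -
    have "sin a * (\<Sum>k<Suc m. cos ((2 * real k + 1) * a)) = sin a * (\<Sum>k<m. cos ((2 * real k + 1) * a)) + sin a * cos ((2 * real m + 1) * a)"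
      by (simp add: distrib_left)
    then show ?thesis using Suc.IH f1 f2 by linarith
  qed
  also have "\<dots> = sin (real (Suc m) * 2 * a) / 2" by (simp only: diff_divide_distrib)
  also have "\<dots> = sin (real (Suc m) * a) * cos (real (Suc m) * a)"
    using sin_double[of "real (Suc m) * a"] by (simp add: algebra_simps)
  finally show ?case .
qed

lemma abs_sin_mult: "\<bar>sin (real j * a)\<bar> \<le> real j * \<bar>sin a\<bar>"
proof (induction j)
  case 0 then show ?case by simp
next
  case (Suc j)
  have "sin (real (Suc j) * a) = sin (real j * a) * cos a + cos (real j * a) * sin a"
    using sin_add[of "real j * a" a] by (simp add: algebra_simps)
  moreover have "\<bar>sin (real j * a) * cos a\<bar> \<le> \<bar>sin (real j * a)\<bar>"
    by (simp add: abs_mult mult_left_le)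
  moreover have "\<bar>cos (real j * a) * sin a\<bar> \<le> \<bar>sin a\<bar>"
    by (simp add: abs_mult mult_left_le_one_le)
  ultimately show ?case using Suc by (simp add: algebra_simps)
qed



definition Ab :: "(nat \<Rightarrow> real) \<Rightarrow> nat \<Rightarrow> real" where
  "Ab c m = (\<Sum>j\<in>{1..<m}. 2 * c j / (4 * real j ^ 2 - 1)) + c m / (2 * real m - 1)"

lemma frac_aux: "(1::real) < m * 2 \<Longrightarrow> 2 * c / ((2 * m - 1) * (2 * m + 1)) - c / (2 * m - 1) = - c / (2 * m + 1)"
proof -
  assume a: "(1::real) < m * 2"
  have p: "2 * m - 1 \<noteq> 0" "2 * m + 1 \<noteq> 0" using a by auto
  have "2 * c / ((2 * m - 1) * (2 * m + 1)) - c / (2 * m - 1) = (2 * c - c * (2 * m + 1)) / ((2 * m - 1) * (2 * m + 1))"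
    using p by (simp add: diff_divide_distrib nonzero_divide_mult_cancel_right)
  also have "2 * c - c * (2 * m + 1) = - c * (2 * m - 1)" by (simp add: algebra_simps)
  also have "- c * (2 * m - 1) / ((2 * m - 1) * (2 * m + 1)) = - c / (2 * m + 1)" using p by simp
  finally show ?thesis .
qed

lemma Ab_Suc:
  assumes "m \<ge> 1"
  shows "Ab c (Suc m) = Ab c m + (c (Suc m) - c m) / (2 * real m + 1)"
proof -
  have s: "(\<Sum>j\<in>{1..<Suc m}. 2 * c j / (4 * real j ^ 2 - 1)) = (\<Sum>j\<in>{1..<m}. 2 * c j / (4 * real j ^ 2 - 1)) + 2 * c m / (4 * real m ^ 2 - 1)"
    using assms by simp
  have m1: "real m \<ge> 1" using assms by simp
  have e: "2 * c m / (4 * real m ^ 2 - 1) - c m / (2 * real m - 1) = - c m / (2 * real m + 1)"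
  proof -
    have f: "4 * real m ^ 2 - 1 = (2 * real m - 1) * (2 * real m + 1)" by (simp add: algebra_simps power2_eq_square)
    show ?thesis unfolding f by (rule frac_aux) (use m1 in simp)
  qed
  show ?thesis unfolding Ab_def s using e by (simp add: algebra_simps diff_divide_distrib add_divide_distrib)
qed

lemma Ab_diff: "Ab (\<lambda>j. c j - d j) m = Ab c m - Ab d m"
  unfolding Ab_def by (simp add: sum_subtractf diff_divide_distrib right_diff_distrib)

lemma Ab_ge2:
  assumes "m \<ge> 2" "\<And>j. 1 \<le> j \<Longrightarrow> j \<le> m \<Longrightarrow> d j \<ge> 0"
  shows "Ab d m \<ge> 2/15 * d 2"
proof (cases "m = 2")
  case True
  have "{1..<2::nat} = {1}" by auto
  then have "Ab d m = 2 * d 1 / 3 + d 2 / 3" using True unfolding Ab_def by simp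
  moreover have "d 1 \<ge> 0" "d 2 \<ge> 0" using assms True by auto
  ultimately show ?thesis by simp
next
  case False
  have "2 * d 2 / (4 * real 2 ^ 2 - 1) \<le> (\<Sum>j\<in>{1..<m}. 2 * d j / (4 * real j ^ 2 - 1))"
  proof (rule member_le_sum)
    show "2 \<in> {1..<m}" using assms False by auto
    fix j assume "j \<in> {1..<m} - {2}"
    then have j: "1 \<le> j" "j \<le> m" by auto
    have "real j ^ 2 \<ge> 1" using j(1) by simp
    then have "4 * real j ^ 2 - 1 > 0" by linarith
    then show "0 \<le> 2 * d j / (4 * real j ^ 2 - 1)" using assms(2)[OF j] by simp
  qed simp
  moreover have "d m / (2 * real m - 1) \<ge> 0" using assms by simp
  moreover have "2 * d 2 / (4 * real 2 ^ 2 - 1) = 2/15 * d 2" by simp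
  ultimately show ?thesis unfolding Ab_def by linarith
qed

lemma Ab_pos:
  assumes "m \<ge> 1" "\<And>j. 1 \<le> j \<Longrightarrow> j \<le> m \<Longrightarrow> d j \<ge> 0" "d 1 > 0"
  shows "Ab d m > 0"
proof (cases "m = 1")
  case True
  then show ?thesis using assms unfolding Ab_def by simp
next
  case False
  have "2 * d 1 / (4 * real 1 ^ 2 - 1) \<le> (\<Sum>j\<in>{1..<m}. 2 * d j / (4 * real j ^ 2 - 1))"
  proof (rule member_le_sum)
    show "1 \<in> {1..<m}" using assms False by auto
    fix j assume "j \<in> {1..<m} - {1}"
    then have j: "1 \<le> j" "j \<le> m" by auto
    have "real j ^ 2 \<ge> 1" using j(1) by simp
    then have "4 * real j ^ 2 - 1 > 0" by linarith
    then show "0 \<le> 2 * d j / (4 * real j ^ 2 - 1)" using assms(2)[OF j] by simp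
  qed simp
  moreover have "d m / (2 * real m - 1) \<ge> 0" using assms by simp
  ultimately show ?thesis unfolding Ab_def using assms(3) by simp
qed

definition Sf :: "nat \<Rightarrow> real \<Rightarrow> real" where
  "Sf m a = (\<Sum>k<m. sin ((2 * real k + 1) * a) / (2 * real k + 1))"

lemma sin_sq_diff: "sin (x::real) ^ 2 - sin y ^ 2 = sin (x + y) * sin (x - y)"
proof -
  have "sin (x + y) * sin (x - y) = sin x ^ 2 * cos y ^ 2 - cos x ^ 2 * sin y ^ 2"
    by (simp add: sin_add sin_diff algebra_simps power2_eq_square)
  also have "\<dots> = sin x ^ 2 * (1 - sin y ^ 2) - (1 - sin x ^ 2) * sin y ^ 2"
    by (simp add: cos_squared_eq)
  finally show ?thesis by (simp add: algebra_simps)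
qed

lemma Ab_Sf:
  assumes "m \<ge> 1" "sin a \<noteq> 0"
  shows "Ab (\<lambda>j. sin (real j * a) ^ 2 / sin a) m = Sf m a"
  using assms(1)
proof (induction m rule: dec_induct)
  case base
  then show ?case unfolding Ab_def Sf_def by (simp add: power2_eq_square assms(2))
next
  case (step m)
  have "sin (real (Suc m) * a) ^ 2 - sin (real m * a) ^ 2 = sin ((2 * real m + 1) * a) * sin a"
    unfolding sin_sq_diff by (simp add: algebra_simps)
  then have "sin (real (Suc m) * a) ^ 2 / sin a - sin (real m * a) ^ 2 / sin a = sin ((2 * real m + 1) * a)"
    using assms(2) by (simp add: field_simps)
  then show ?case using step Ab_Suc[OF step(1)] unfolding Sf_def by simp
qed

lemma Ab_c1:
  assumes "1 \<le> m" "m \<le> K" "u > 0"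
  shows "Ab (\<lambda>j. if j \<le> K then real j ^ 2 / u else u) m = real m / u"
  using assms(1,2)
proof (induction m rule: dec_induct)
  case base
  then show ?case unfolding Ab_def by simp
next
  case (step m)
  have e: "(real (Suc m) ^ 2 / u - real m ^ 2 / u) / (2 * real m + 1) = 1 / u"
  proof -
    have "real (Suc m) ^ 2 - real m ^ 2 = 2 * real m + 1" by (simp add: power2_eq_square algebra_simps)
    then have "real (Suc m) ^ 2 / u - real m ^ 2 / u = (2 * real m + 1) / u" by (simp add: diff_divide_distrib[symmetric])
    moreover have "2 * real m + 1 > 0" by simp
    ultimately show ?thesis using assms(3) by simp
  qed
  show ?case using step Ab_Suc[OF step(1), of "\<lambda>j. if j \<le> K then real j ^ 2 / u else u"] e
    by (simp add: add_divide_distrib)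
qed

lemma Ab_c2:
  assumes "K \<ge> 1" "K < m" "u > 0"
  shows "Ab (\<lambda>j. if j \<le> K then real j ^ 2 / u else u) m = real K / u + (u - real K ^ 2 / u) / (2 * real K + 1)"
proof -
  have "Suc K \<le> m" using assms(2) by simp
  then show ?thesis
proof (induction m rule: dec_induct)
  case base
  then show ?case using Ab_Suc[OF assms(1), of "\<lambda>j. if j \<le> K then real j ^ 2 / u else u"]
      Ab_c1[OF assms(1) order_refl assms(3)] by simp
next
  case (step m)
  then show ?case using Ab_Suc[of m "\<lambda>j. if j \<le> K then real j ^ 2 / u else u"] assms by simp
qed
qed



lemma frac_aux2: "(u::real) > 0 \<Longrightarrow> k \<ge> 0 \<Longrightarrow> k / u + (u - k ^ 2 / u) / (2 * k + 1) = 1 - (-(u - k) * (u - k - 1)) / (u * (2 * k + 1))"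
proof -
  assume u: "u > 0" and k: "k \<ge> 0"
  define D where "D = u * (2 * k + 1)"
  have D: "D > 0" unfolding D_def using u k by simp
  have d: "2 * k + 1 \<noteq> 0" "u \<noteq> 0" using u k by auto
  have "(k / u + (u - k ^ 2 / u) / (2 * k + 1)) * D = k * (2 * k + 1) + (u - k ^ 2 / u) * u"
    unfolding D_def using d by (simp add: distrib_right)
  also have "\<dots> = k^2 + k + u^2" using d by (simp add: algebra_simps power2_eq_square)
  finally have l: "k / u + (u - k ^ 2 / u) / (2 * k + 1) = (k^2 + k + u^2) / D"
    using D by (simp add: eq_divide_eq)
  have r: "1 - (-(u - k) * (u - k - 1)) / D = (k^2 + k + u^2) / D"
    using D unfolding D_def by (simp add: field_simps power2_eq_square)
  show ?thesis using l r unfolding D_def by simp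
qed

lemma Sf_bounds:
  assumes m: "m \<ge> 1" and a: "0 < a" "a < pi"
  shows "0 < Sf m a \<and> Sf m a \<le> 1 \<and> (Sf m a = 1 \<longrightarrow> m = 1 \<and> a = pi / 2)"
proof -
  define s where "s = sin a"
  have s0: "s > 0" unfolding s_def using a by (simp add: sin_gt_zero)
  have s1: "s \<le> 1" unfolding s_def by simp
  define A where "A = (\<lambda>j. sin (real j * a) ^ 2 / s)"
  have A0: "A j \<ge> 0" for j unfolding A_def using s0 by simp
  have SfA: "Sf m a = Ab A m" unfolding A_def s_def using Ab_Sf[OF m] s0 s_def by simp
  have A1: "A 1 = s" unfolding A_def s_def using s0 s_def by (simp add: power2_eq_square)
  have pos: "0 < Sf m a" unfolding SfA by (rule Ab_pos[OF m]) (use A0 A1 s0 in auto)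
  define u where "u = 1 / s"
  have u1: "u \<ge> 1" unfolding u_def using s0 s1 by simp
  have u0: "u > 0" using u1 by simp
  define K where "K = nat \<lfloor>u\<rfloor>"
  have K1: "real K \<le> u" "u < real K + 1" unfolding K_def using u1 by linarith+
  have K0: "K \<ge> 1" unfolding K_def using u1 by linarith
  define c where "c = (\<lambda>j. if j \<le> K then real j ^ 2 / u else u)"
  have Ac: "A j \<le> c j" for j
  proof (cases "j \<le> K")
    case True
    have "\<bar>sin (real j * a)\<bar> \<le> real j * s" using abs_sin_mult[of j a] s0 unfolding s_def by simp
    then have "sin (real j * a) ^ 2 \<le> (real j * s) ^ 2"
      by (metis abs_ge_zero order_trans power2_abs power_mono)
    then have "A j \<le> (real j * s) ^ 2 / s" unfolding A_def using s0 by (simp add: divide_right_mono)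
    also have "\<dots> = real j ^ 2 / u" unfolding u_def using s0 by (simp add: power2_eq_square)
    finally show ?thesis unfolding c_def using True by simp
  next
    case False
    have "sin (real j * a) ^ 2 \<le> 1" by (simp add: abs_square_le_1)
    then have "A j \<le> 1 / s" unfolding A_def using s0 by (simp add: divide_right_mono)
    then show ?thesis unfolding c_def u_def using False by simp
  qed
  have Cb: "Ab c m \<le> 1 \<and> (Ab c m = 1 \<longrightarrow> u = real K)"
  proof (cases "m \<le> K")
    case True
    have e: "Ab c m = real m / u" unfolding c_def by (rule Ab_c1[OF m True u0])
    have "real m \<le> u" using True K1 by linarith
    then show ?thesis unfolding e using u0 True K1 by (auto simp: divide_le_eq_1)
  next
    case False
    have e: "Ab c m = real K / u + (u - real K ^ 2 / u) / (2 * real K + 1)"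
      unfolding c_def by (rule Ab_c2[OF K0 _ u0]) (use False in simp)
    have q: "(u - real K) * (u - real K - 1) \<le> 0"
      using K1 by (intro mult_nonneg_nonpos) auto
    have e2: "Ab c m = 1 - (-(u - real K) * (u - real K - 1)) / (u * (2 * real K + 1))"
      unfolding e by (rule frac_aux2[OF u0]) simp
    have d: "u * (2 * real K + 1) > 0" using u0 by simp
    have q': "0 \<le> -(u - real K) * (u - real K - 1)" using q by (simp only: minus_mult_left[symmetric])
    have le: "Ab c m \<le> 1" unfolding e2 using divide_nonneg_pos[OF q' d] by linarith
    moreover have "Ab c m = 1 \<longrightarrow> u = real K"
    proof
      assume "Ab c m = 1"
      then have "(-(u - real K) * (u - real K - 1)) / (u * (2 * real K + 1)) = 0" using e2 by linarith
      then have "-(u - real K) * (u - real K - 1) = 0" using d u0 by auto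
      then have "u - real K = 0 \<or> u - real K - 1 = 0" by auto
      then show "u = real K" using K1 by auto
    qed
    ultimately show ?thesis by blast
  qed
  have dec: "Sf m a = Ab c m - Ab (\<lambda>j. c j - A j) m" unfolding SfA Ab_diff by simp
  have dnn: "Ab (\<lambda>j. c j - A j) m \<ge> 0"
  proof (cases "m = 1")
    case True then show ?thesis unfolding Ab_def using Ac[of 1] by simp
  next
    case False
    then have m2': "m \<ge> 2" using m by simp
    have "2/15 * (c 2 - A 2) \<le> Ab (\<lambda>j. c j - A j) m"
      by (rule Ab_ge2[OF m2']) (use Ac in simp)
    moreover have "0 \<le> 2/15 * (c 2 - A 2)" using Ac[of 2] by simp
    ultimately show ?thesis by (rule order_trans[rotated])
  qed
  have le1: "Sf m a \<le> 1" using dec dnn Cb by linarith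
  have eq: "m = 1 \<and> a = pi / 2" if e1: "Sf m a = 1"
  proof (cases "m = 1")
    case True
    have "Sf m a = sin a" unfolding True Sf_def by simp
    then have "sin a = 1" using e1 by simp
    then have "cos a = 0" using sin_cos_squared_add[of a] by simp
    then have "arccos (cos a) = pi / 2" by simp
    moreover have "arccos (cos a) = a" using a by (intro arccos_cos) auto
    ultimately show ?thesis using True by simp
  next
    case False
    then have m2: "m \<ge> 2" using m by simp
    have g: "Ab (\<lambda>j. c j - A j) m \<ge> 2/15 * (c 2 - A 2)"
      by (rule Ab_ge2[OF m2]) (use Ac in simp)
    have c2: "c 2 - A 2 \<ge> 0" using Ac[of 2] by simp
    have "Ab c m = 1" "Ab (\<lambda>j. c j - A j) m \<le> 0" using e1 dec Cb dnn by linarith+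
    moreover from this(2) g have "2/15 * (c 2 - A 2) \<le> 0" by (rule order_trans[rotated])
    ultimately have "Ab c m = 1" "c 2 = A 2" using c2 by auto
    then have uK: "u = real K" using Cb by simp
    have A2: "A 2 = 4 * s * cos a ^ 2"
      unfolding A_def s_def using s0 s_def by (simp add: sin_double power2_eq_square)
    have cs: "cos a ^ 2 = 1 - s ^ 2" unfolding s_def by (simp add: cos_squared_eq)
    show ?thesis
    proof (cases "K = 1")
      case True
      then have "s = 1" using uK unfolding u_def using s0 by (simp add: divide_eq_1_iff)
      then have "A 2 = 0" using A2 cs by simp
      moreover have "c 2 = u" unfolding c_def using True by simp
      ultimately show ?thesis using \<open>c 2 = A 2\<close> u0 by simp
    next
      case False
      then have "c 2 = 4 / u" unfolding c_def using K0 by simp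
      also have "\<dots> = 4 * s" unfolding u_def using s0 by simp
      finally have "4 * s * (1 - s ^ 2) = 4 * s" using \<open>c 2 = A 2\<close> A2 cs by simp
      then have "s ^ 2 = 0" using s0 by (simp add: algebra_simps)
      then show ?thesis using s0 by simp
    qed
  qed
  show ?thesis using pos le1 eq by blast
qed



lemma TU_arccos:
  assumes t: "-1 < t" "t < 1"
  shows "cheb_T (Suc n) t * cheb_U n t = (\<Sum>k<Suc n. cos ((2 * real k + 1) * arccos t))"
proof -
  define th where "th = arccos t"
  have ct: "cos th = t" unfolding th_def using t by simp
  have s0: "sin th \<noteq> 0" unfolding th_def using t by (simp add: sin_arccos_nonzero)
  have "cheb_T (Suc n) t * cheb_U n t * sin th = cos (real (Suc n) * th) * sin (real (Suc n) * th)"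
    using cheb_cos[of "Suc n" th] cheb_cos[of n th] unfolding ct by (simp add: mult.assoc)
  also have "\<dots> = sin th * (\<Sum>k<Suc n. cos ((2 * real k + 1) * th))"
    using sum_cos_odd[of th "Suc n"] by (simp add: mult.commute)
  finally show ?thesis using s0 unfolding th_def by simp
qed

lemma Sf_deriv: "(Sf m has_real_derivative (\<Sum>k<m. cos ((2 * real k + 1) * a))) (at a)"
proof -
  have "((\<lambda>a. \<Sum>k<m. sin ((2 * real k + 1) * a) / (2 * real k + 1)) has_real_derivative
        (\<Sum>k<m. cos ((2 * real k + 1) * a) * (2 * real k + 1) / (2 * real k + 1))) (at a)"
    by (auto intro!: derivative_eq_intros)
  moreover have "(\<Sum>k<m. cos ((2 * real k + 1) * a) * (2 * real k + 1) / (2 * real k + 1)) = (\<Sum>k<m. cos ((2 * real k + 1) * a))"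
    by (intro sum.cong) auto
  ultimately show ?thesis unfolding Sf_def[abs_def] by simp
qed

lemma Sf_cont: "continuous_on S (Sf m)"
  unfolding Sf_def[abs_def] by (auto intro!: continuous_intros)

lemma abs_Dc: "\<bar>\<Sum>k<m. cos ((2 * real k + 1) * a)\<bar> \<le> real m"
proof -
  have "\<bar>\<Sum>k<m. cos ((2 * real k + 1) * a)\<bar> \<le> (\<Sum>k<m. \<bar>cos ((2 * real k + 1) * a)\<bar>)" by (rule sum_abs)
  also have "\<dots> \<le> (\<Sum>k<m. 1)" by (intro sum_mono) simp
  finally show ?thesis by simp
qed

lemma integral_main:
  fixes n :: nat and x :: real
  assumes x: "-1 < x" "x < 1"
  shows "interval_lebesgue_integrable lborel (ereal x) 1
           (\<lambda>t. cheb_T (Suc n) t * cheb_U n t / sqrt (1 - t\<^sup>2))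
       \<and> (LBINT t=ereal x..1. cheb_T (Suc n) t * cheb_U n t / sqrt (1 - t\<^sup>2)) = Sf (Suc n) (arccos x)"
proof -
  define m where "m = Suc n"
  define f where "f = (\<lambda>t. cheb_T (Suc n) t * cheb_U n t / sqrt (1 - t\<^sup>2))"
  define h where "h = (\<lambda>t::real. 1 / sqrt (1 - t\<^sup>2))"
  define g where "g = (\<lambda>t. f t + real m * h t)"
  have fgh: "f = (\<lambda>t. g t - real m * h t)" unfolding g_def by simp
  have ab: "ereal x < 1" using x by simp
  have inside: "-1 < t \<and> t < 1" if "ereal x < ereal t" "ereal t < 1" for t
    using that x by auto
  have sq: "sqrt (1 - t\<^sup>2) > 0" if "-1 < t" "t < 1" for t :: real
  proof -
    have "t\<^sup>2 < 1" using that by (simp add: abs_square_less_1)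
    then show ?thesis by simp
  qed
  have fD: "f t = (\<Sum>k<m. cos ((2 * real k + 1) * arccos t)) * h t" if "-1 < t" "t < 1" for t
    unfolding f_def h_def m_def using TU_arccos[OF that, of n] by simp
  have contT: "isCont (\<lambda>t. cheb_T (Suc n) t * cheb_U n t) t" for t
    using cont_T[of "Suc n"] cont_U[of n]
    by (intro continuous_intros) (auto simp: continuous_on_eq_continuous_at)
  have hc: "isCont h t" if "-1 < t" "t < 1" for t
    unfolding h_def using sq[OF that] by (auto intro!: continuous_intros)
  have fc: "isCont f t" if "-1 < t" "t < 1" for t
    unfolding f_def using sq[OF that] contT[of t] by (auto intro!: continuous_intros)
  have darc: "DERIV arccos t :> - h t" if "-1 < t" "t < 1" for t
    using DERIV_arccos[OF that] unfolding h_def by (simp add: divide_inverse)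
  have hF: "DERIV (\<lambda>t. - arccos t) t :> h t" if "ereal x < ereal t" "ereal t < 1" for t
    using darc[of t] inside[OF that] by (auto intro!: derivative_eq_intros simp: h_def divide_inverse)
  have arc_cont: "continuous_on {-1..1} arccos" by (rule continuous_on_arccos')
  have limA: "(((\<lambda>t. F t) \<circ> real_of_ereal) \<longlongrightarrow> F x) (at_right (ereal x))" if "continuous_on {-1..1} F" for F
  proof -
    have "continuous_on {x..1} F" using that by (rule continuous_on_subset) (use x in auto)
    then have "(F \<longlongrightarrow> F x) (at_right x)" using x by (intro continuous_on_Icc_at_rightD) auto
    then show ?thesis by (simp add: ereal_tendsto_simps1)
  qed
  have limB: "(((\<lambda>t. F t) \<circ> real_of_ereal) \<longlongrightarrow> F 1) (at_left 1)" if "continuous_on {-1..1} F" for F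
  proof -
    have "(F \<longlongrightarrow> F 1) (at_left 1)" using that by (intro continuous_on_Icc_at_leftD) auto
    then show ?thesis using ereal_tendsto_simps1(1)[of F "F 1" 1] by (simp add: one_ereal_def)
  qed
  have hpos: "AE t in lborel. ereal x < ereal t \<longrightarrow> ereal t < 1 \<longrightarrow> 0 \<le> h t"
  proof (intro AE_I2 impI)
    fix t assume "ereal x < ereal t" "ereal t < 1"
    then have tt: "-1 < t" "t < 1" using inside by auto
    show "0 \<le> h t" unfolding h_def using sq[OF tt] by simp
  qed
  have c1: "continuous_on {-1..1} (\<lambda>t. - arccos t)" using arc_cont by (auto intro!: continuous_intros)
  have hc': "isCont h t" if "ereal x < ereal t" "ereal t < 1" for t using hc inside[OF that] by blast
  note H = interval_integral_FTC_nonneg[OF ab hF hc' hpos limA[OF c1] limB[OF c1]]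
  define G where "G = (\<lambda>t. - Sf m (arccos t) - real m * arccos t)"
  have gF: "DERIV G t :> g t" if "ereal x < ereal t" "ereal t < 1" for t
  proof -
    have tt: "-1 < t" "t < 1" using inside[OF that] by auto
    have "DERIV (\<lambda>t. Sf m (arccos t)) t :> (\<Sum>k<m. cos ((2 * real k + 1) * arccos t)) * (- h t)"
      by (rule DERIV_chain2[OF Sf_deriv darc[OF tt]])
    then have "DERIV G t :> - ((\<Sum>k<m. cos ((2 * real k + 1) * arccos t)) * (- h t)) - real m * (- h t)"
      unfolding G_def using tt by (auto intro!: derivative_eq_intros simp: h_def divide_inverse)
    then show ?thesis unfolding g_def using fD[OF tt] by simp
  qed
  have gc: "isCont g t" if "-1 < t" "t < 1" for t
    unfolding g_def using fc[OF that] hc[OF that] by (auto intro!: continuous_intros)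
  have gpos: "AE t in lborel. ereal x < ereal t \<longrightarrow> ereal t < 1 \<longrightarrow> 0 \<le> g t"
  proof (intro AE_I2 impI)
    fix t assume "ereal x < ereal t" "ereal t < 1"
    then have tt: "-1 < t" "t < 1" using inside by auto
    have hp: "h t > 0" unfolding h_def using sq[OF tt] by simp
    have lm: "- real m \<le> (\<Sum>k<m. cos ((2 * real k + 1) * arccos t))"
      using abs_Dc[where m=m and a="arccos t"] by linarith
    have "- real m * h t \<le> (\<Sum>k<m. cos ((2 * real k + 1) * arccos t)) * h t"
      using mult_right_mono[OF lm, of "h t"] hp by simp
    then show "0 \<le> g t" unfolding g_def using fD[OF tt] by simp
  qed
  have c2: "continuous_on {-1..1} G"
  proof -
    have a1: "continuous_on {-1..1} (\<lambda>t. Sf m (arccos t))"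
      using continuous_on_compose[OF arc_cont Sf_cont[of "arccos ` {-1..1}" m]] by (simp add: o_def)
    have a2: "continuous_on {-1..1} (\<lambda>t. real m * arccos t)"
      by (rule continuous_on_mult[OF continuous_on_const arc_cont])
    show ?thesis unfolding G_def by (rule continuous_on_diff[OF continuous_on_minus[OF a1] a2])
  qed
  have gc': "isCont g t" if "ereal x < ereal t" "ereal t < 1" for t using gc inside[OF that] by blast
  note GG = interval_integral_FTC_nonneg[OF ab gF gc' gpos limA[OF c2] limB[OF c2]]
  have ih: "interval_lebesgue_integrable lborel (ereal x) 1 h"
    unfolding interval_lebesgue_integrable_def using H(1) by (simp only: if_P[OF less_imp_le[OF ab]])
  have ig: "interval_lebesgue_integrable lborel (ereal x) 1 g"
    unfolding interval_lebesgue_integrable_def using GG(1) by (simp only: if_P[OF less_imp_le[OF ab]])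
  have ihm: "interval_lebesgue_integrable lborel (ereal x) 1 (\<lambda>t. real m * h t)" using ih by simp
  have ifm: "interval_lebesgue_integrable lborel (ereal x) 1 f"
    unfolding fgh by (rule interval_lebesgue_integral_diff(1)[OF ig ihm])
  have "(LBINT t=ereal x..1. f t) = (LBINT t=ereal x..1. g t) - real m * (LBINT t=ereal x..1. h t)"
    unfolding fgh using interval_lebesgue_integral_diff(2)[OF ig ihm] by simp
  also have "\<dots> = Sf m (arccos x)"
    using H(2) GG(2) unfolding G_def by (simp add: Sf_def algebra_simps)
  finally show ?thesis using ifm unfolding f_def m_def by simp
qed


theorem theorem4p5:
  fixes n :: nat and x :: real
  assumes "-1 < x" and "x < 1"
  shows "interval_lebesgue_integrable lborel (ereal x) 1
           (\<lambda>t. cheb_T (Suc n) t * cheb_U n t / sqrt (1 - t\<^sup>2))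
       \<and> 0 < (LBINT t=ereal x..1. cheb_T (Suc n) t * cheb_U n t / sqrt (1 - t\<^sup>2))
       \<and> (LBINT t=ereal x..1. cheb_T (Suc n) t * cheb_U n t / sqrt (1 - t\<^sup>2)) \<le> 1
       \<and> ((LBINT t=ereal x..1. cheb_T (Suc n) t * cheb_U n t / sqrt (1 - t\<^sup>2)) = 1
            \<longleftrightarrow> n = 0 \<and> x = 0)"
proof -
  note I = integral_main[OF assms, of n]
  have a: "0 < arccos x" "arccos x < pi" using arccos_lt_bounded[OF assms] by auto
  note S = Sf_bounds[of "Suc n" "arccos x", OF _ a]
  have iff: "Sf (Suc n) (arccos x) = 1 \<longleftrightarrow> n = 0 \<and> x = 0"
  proof
    assume "Sf (Suc n) (arccos x) = 1"
    then have h0: "Suc n = 1" and h1: "arccos x = pi / 2" using S by auto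
    have h2: "x = cos (arccos x)" using assms by simp
    from h2 have "x = cos (pi / 2)" unfolding h1 .
    then have "n = 0" "x = 0" using h0 by simp_all
    then show "n = 0 \<and> x = 0" by simp
  next
    assume "n = 0 \<and> x = 0"
    then show "Sf (Suc n) (arccos x) = 1" by (simp add: Sf_def)
  qed
  show ?thesis using I S iff by auto
qed

end
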